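(* Let $G=GL_n(\mathbb C)$, $\mathfrak g=\mathfrak{gl}_n(\mathbb C)$, $v_0\in\mathbb C^n$ nonzero, $P=\{g\in G:gv_0=v_0\}$ with Lie algebra $\mathfrak p=\{A\in\mathfrak g:Av_0=0\}$, and let $\mathfrak p^\perp$ be the orthogonal of $\mathfrak p$ for the form $(A,B)\mapsto\mathrm{trace}(AB)$. Let $X$ be a regular nilpotent element of $\mathfrak g$ (a single Jordan block). If the orbit $P.X$ (under conjugation) is not open dense in $G.X$, then there exists a semisimple $Y\in\mathfrak g$ not in the center of $\mathfrak g$ such that $[X,Y]\in\mathfrak p^\perp$. *)

theory Defs
  imports "HOL-Analysis.Analysis"
begin

type_synonym 'n cmat = "complex^'n^'n"

definition conj_act :: "'n::finite cmat \<Rightarrow> 'n cmat \<Rightarrow> 'n cmat" where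
  "conj_act g X = g ** X ** matrix_inv g"

definition GL :: "'n::finite cmat set" where
  "GL = {g. invertible g}"

definition stab :: "complex^'n \<Rightarrow> 'n::finite cmat set" where
  "stab v0 = {g. invertible g \<and> g *v v0 = v0}"

definition orbit :: "'n::finite cmat set \<Rightarrow> 'n cmat \<Rightarrow> 'n cmat set" where
  "orbit H X = (\<lambda>g. conj_act g X) ` H"

definition lie_p :: "complex^'n \<Rightarrow> 'n::finite cmat set" where
  "lie_p v0 = {A. A *v v0 = 0}"

definition trace_perp :: "'n::finite cmat set \<Rightarrow> 'n cmat set" where
  "trace_perp S = {B. \<forall>A\<in>S. trace (A ** B) = 0}"

definition bracket :: "'n::finite cmat \<Rightarrow> 'n cmat \<Rightarrow> 'n cmat" where
  "bracket X Y = X ** Y - Y ** X"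

definition gl_center :: "'n::finite cmat set" where
  "gl_center = {Z. \<forall>A. bracket A Z = 0}"

definition semisimple_mat :: "'n::finite cmat \<Rightarrow> bool" where
  "semisimple_mat Y \<longleftrightarrow> (\<exists>(S::'n cmat) (D::'n cmat). invertible S \<and> (\<forall>i j. i \<noteq> j \<longrightarrow> D $ i $ j = 0)
      \<and> Y = S ** D ** matrix_inv S)"

text \<open>Regular nilpotent: conjugate to a single nilpotent Jordan block, where the
  index type is ordered via a bijection sigma onto {0..<n}.\<close>
definition regular_nilpotent :: "'n::finite cmat \<Rightarrow> bool" where
  "regular_nilpotent X \<longleftrightarrow> (\<exists>(S::'n cmat) \<sigma>. invertible S \<and> bij_betw \<sigma> (UNIV::'n set) {0..<CARD('n)}
      \<and> matrix_inv S ** X ** S = (\<chi> i j. if \<sigma> j = Suc (\<sigma> i) then 1 else 0))"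

end

theory Submission
  imports Defs
begin


definition Jm :: "('n::finite \<Rightarrow> nat) \<Rightarrow> complex^'n^'n" where
  "Jm s = (\<chi> i j. if s j = Suc (s i) then 1 else 0)"
definition Zm :: "('n::finite \<Rightarrow> nat) \<Rightarrow> complex^'n^'n" where
  "Zm s = (\<chi> i j. if s i = Suc (s j) then 1 else 0)"
definition pw :: "complex^'n^'n \<Rightarrow> nat \<Rightarrow> complex^'n \<Rightarrow> complex^'n" where
  "pw N k w = ((\<lambda>x. N *v x) ^^ k) w"
definition kry :: "('n::finite \<Rightarrow> nat) \<Rightarrow> complex^'n^'n \<Rightarrow> complex^'n \<Rightarrow> complex^'n^'n" where
  "kry s N w = (\<chi> i j. pw N (s j) w $ i)"

lemma pw_0[simp]: "pw N 0 w = w" by (simp add: pw_def)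
lemma pw_Suc: "pw N (Suc k) w = N *v pw N k w" by (simp add: pw_def)

lemma minv_r: fixes A :: "'a::semiring_1^'n^'n" assumes "invertible A" shows "A ** matrix_inv A = mat 1"
  using assms unfolding invertible_def matrix_inv_def by (rule someI_ex[THEN conjunct1])
lemma minv_l: fixes A :: "'a::semiring_1^'n^'n" assumes "invertible A" shows "matrix_inv A ** A = mat 1"
  using assms unfolding invertible_def matrix_inv_def by (rule someI_ex[THEN conjunct2])
lemma minv_unique: fixes A :: "'a::semiring_1^'n^'n" assumes "A ** B = mat 1" "B ** A = mat 1"
  shows "matrix_inv A = B"
proof -
  have i: "invertible A" using assms unfolding invertible_def by blast
  have "matrix_inv A = matrix_inv A ** (A ** B)" by (simp add: assms)
  also have "\<dots> = B" by (simp add: matrix_mul_assoc minv_l[OF i])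
  finally show ?thesis .
qed
lemma inv_invertible: fixes A :: "'a::semiring_1^'n^'n" assumes "invertible A" shows "invertible (matrix_inv A)"
  using minv_l[OF assms] minv_r[OF assms] unfolding invertible_def by blast

lemma col: "((M::'a::comm_semiring_1^'n^'m) *v axis j 1) $ i = M $ i $ j"
  by (simp add: matrix_vector_mult_def axis_def if_distrib cong: if_cong)

lemma pw_conj: assumes "g' ** g = mat 1"
  shows "pw (g ** N ** g') k (g *v w) = g *v pw N k w"
proof (induction k)
  case (Suc k)
  have "pw (g ** N ** g') (Suc k) (g *v w) = (g ** N ** g') *v (g *v pw N k w)" by (simp add: pw_Suc Suc)
  also have "\<dots> = g *v (N *v ((g' ** g) *v pw N k w))" by (simp add: matrix_vector_mul_assoc matrix_mul_assoc)
  finally show ?case by (simp add: assms pw_Suc)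
qed simp

lemma kry_conj: assumes "g' ** g = mat 1"
  shows "kry s (g ** N ** g') (g *v w) = g ** kry s N w"
  unfolding kry_def pw_conj[OF assms] by (simp add: matrix_matrix_mult_def matrix_vector_mult_def vec_eq_iff)

locale ordn = fixes s :: "'n::finite \<Rightarrow> nat" assumes bij: "bij_betw s UNIV {0..<CARD('n)}"
begin
definition t where "t k = inv_into UNIV s k"
lemma s_lt[simp]: "s i < CARD('n)" using bij by (auto simp: bij_betw_def)
lemma inj_s: "inj s" using bij by (auto simp: bij_betw_def)
lemma t_s[simp]: "t (s i) = i" using inj_s by (simp add: t_def)
lemma s_t[simp]: "k < CARD('n) \<Longrightarrow> s (t k) = k"
  using bij unfolding t_def bij_betw_def by (simp add: f_inv_into_f)
lemma s_eq: "k < CARD('n) \<Longrightarrow> (s j = k) \<longleftrightarrow> (j = t k)" by auto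

lemma sum_sig: "(\<Sum>k\<in>UNIV. if s k = c then f k else 0) = (if c < CARD('n) then f (t c) else (0::'a::comm_monoid_add))"
proof (cases "c < CARD('n)")
  case True then show ?thesis by (simp add: s_eq)
next
  case False
  then have "\<And>k. s k \<noteq> c" using s_lt by (metis)
  then show ?thesis using False by simp
qed
lemma sum_sig_r: "(\<Sum>k\<in>UNIV. f k * (if s k = c then 1 else 0)) = (if c < CARD('n) then f (t c) else (0::'a::semiring_1))"
  by (subst sum_sig[symmetric]) (rule sum.cong, auto)
lemma sum_sig_l: "(\<Sum>k\<in>UNIV. (if s k = c then 1 else 0) * f k) = (if c < CARD('n) then f (t c) else (0::'a::semiring_1))"
  by (subst sum_sig[symmetric]) (rule sum.cong, auto)

lemma J_mult: "(Jm s *v x) $ i = (if Suc (s i) < CARD('n) then x $ t (Suc (s i)) else 0)"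
  by (simp add: Jm_def matrix_vector_mult_def sum_sig_l)

lemma pw_J: "pw (Jm s) k w $ i = (if s i + k < CARD('n) then w $ t (s i + k) else 0)"
proof (induction k arbitrary: i)
  case (Suc k)
  show ?case by (simp add: pw_Suc J_mult Suc)
qed simp

lemma J_mat: "(Jm s ** M) $ i $ j = (if Suc (s i) < CARD('n) then M $ t (Suc (s i)) $ j else 0)"
  by (simp add: Jm_def matrix_matrix_mult_def sum_sig_l)
lemma Z_mat: "(M ** Zm s) $ i $ j = (if Suc (s j) < CARD('n) then M $ i $ t (Suc (s j)) else 0)"
  by (simp add: Zm_def matrix_matrix_mult_def sum_sig_r)
lemma kry_J: "kry s (Jm s) w $ i $ j = (if s i + s j < CARD('n) then w $ t (s i + s j) else 0)"
  by (simp add: kry_def pw_J)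

lemma K1: "Jm s ** kry s (Jm s) w = kry s (Jm s) w ** Zm s"
  by (simp add: vec_eq_iff J_mat Z_mat kry_J)

end

context ordn begin

lemma K3: assumes w: "w $ t (CARD('n) - 1) \<noteq> 0"
  shows "invertible (kry s (Jm s) w)"
proof -
  let ?n = "CARD('n)"
  let ?K = "kry s (Jm s) w"
  have "\<forall>x. ?K *v x = 0 \<longrightarrow> x = 0"
  proof (intro allI impI, rule ccontr)
    fix x assume Kx: "?K *v x = 0" and x0: "x \<noteq> 0"
    define P where "P m = (\<exists>j. s j = m \<and> x $ j \<noteq> 0)" for m
    have ex: "\<exists>m. P m" using x0 unfolding P_def by (auto simp: vec_eq_iff)
    define m0 where "m0 = (LEAST m. P m)"
    have Pm0: "P m0" unfolding m0_def using ex by (metis LeastI_ex)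
    have lt: "\<And>m. m < m0 \<Longrightarrow> \<not> P m" unfolding m0_def using not_less_Least by blast
    obtain j0 where j0: "s j0 = m0" "x $ j0 \<noteq> 0" using Pm0 P_def by blast
    have m0n: "m0 < ?n" using j0 s_lt by metis
    define i0 where "i0 = t (?n - 1 - m0)"
    have si0: "s i0 = ?n - 1 - m0" unfolding i0_def using m0n by simp
    have "(?K *v x) $ i0 = (\<Sum>j\<in>UNIV. if j = j0 then w $ t (?n - 1) * x $ j0 else 0)"
      unfolding matrix_vector_mult_def vec_lambda_beta
    proof (rule sum.cong[OF refl])
      fix j
      show "?K $ i0 $ j * x $ j = (if j = j0 then w $ t (?n - 1) * x $ j0 else 0)"
      proof (cases "j = j0")
        case True then show ?thesis using si0 j0 m0n by (simp add: kry_J)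
      next
        case False
        consider "s j < m0" | "s j = m0" | "s j > m0" by linarith
        then show ?thesis
        proof cases
          case 1 then have "x $ j = 0" using lt[of "s j"] unfolding P_def by blast
          then show ?thesis using False by simp
        next
          case 2 then have "j = j0" using j0 inj_s by (metis injD)
          then show ?thesis using False by simp
        next
          case 3 then show ?thesis using False si0 by (simp add: kry_J)
        qed
      qed
    qed
    also have "\<dots> = w $ t (?n - 1) * x $ j0" by simp
    finally have "(?K *v x) $ i0 \<noteq> 0" using w j0 by simp
    then show False using Kx by simp
  qed
  then have "\<exists>B. B ** ?K = mat 1" using matrix_left_invertible_ker by blast
  then show ?thesis using invertible_left_inverse by blast
qed

end


lemma X_eq: fixes S :: "'a::semiring_1^'n^'n" assumes S: "invertible S" and XJ: "matrix_inv S ** X ** S = J"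
  shows "X = S ** J ** matrix_inv S"
proof -
  have "S ** J ** matrix_inv S = (S ** matrix_inv S) ** X ** (S ** matrix_inv S)"
    by (simp add: XJ[symmetric] matrix_mul_assoc)
  then show ?thesis by (simp add: minv_r[OF S])
qed

lemma mm_diff_l: "(A::'a::ring_1^'n^'m) ** (B - C) = A ** B - A ** C"
  by (simp add: vec_eq_iff matrix_matrix_mult_def sum_subtractf algebra_simps)
lemma mm_diff_r: "((B::'a::ring_1^'n^'m) - C) ** A = B ** A - C ** A"
  by (simp add: vec_eq_iff matrix_matrix_mult_def sum_subtractf algebra_simps)

context ordn begin

lemma caseB:
  fixes S X :: "complex^'n^'n" and v0 :: "complex^'n"
  assumes S: "invertible S" and XJ: "matrix_inv S ** X ** S = Jm s" and v0: "v0 \<noteq> 0"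
   and u0: "(matrix_inv S *v v0) $ t (CARD('n) - 1) = 0"
  shows "\<exists>Y. semisimple_mat Y \<and> Y \<notin> gl_center \<and> bracket X Y \<in> trace_perp (lie_p v0)"
proof -
  let ?n = "CARD('n)"
  define u where "u = matrix_inv S *v v0"
  have Su: "S *v u = v0" unfolding u_def by (simp add: matrix_vector_mul_assoc minv_r[OF S])
  have u_ne: "u \<noteq> 0" using Su v0 by auto
  define M where "M = {k. k < ?n \<and> u $ t k \<noteq> 0}"
  have finM: "finite M" unfolding M_def by simp
  obtain i where "u $ i \<noteq> 0" using u_ne by (auto simp: vec_eq_iff)
  then have "s i \<in> M" unfolding M_def by simp
  then have Mne: "M \<noteq> {}" by blast
  define m where "m = Max M"
  have mM: "m \<in> M" unfolding m_def using finM Mne by simp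
  have mlt: "m < ?n" and um: "u $ t m \<noteq> 0" using mM M_def by auto
  have above: "u $ t k = 0" if "m < k" "k < ?n" for k
  proof (rule ccontr)
    assume "u $ t k \<noteq> 0"
    then have "k \<in> M" using that by (simp add: M_def)
    then have "k \<le> m" using finM m_def by simp
    then show False using that by simp
  qed
  have mne: "m \<noteq> ?n - 1" using um u0 u_def by auto
  define p where "p = ?n - 1 - m"
  have p1: "1 \<le> p" "p < ?n" using mne mlt unfolding p_def by auto
  define w where "w = (\<chi> i. if p \<le> s i then u $ t (s i - p) else 0)"
  have wl: "w $ t (?n - 1) \<noteq> 0" using p1 um unfolding w_def p_def by (simp add: mlt)
  define K where "K = kry s (Jm s) w"
  have K: "invertible K" unfolding K_def using K3[OF wl] .
  have Kp: "K *v axis (t p) 1 = u"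
  proof (subst vec_eq_iff, rule allI)
    fix i
    show "(K *v axis (t p) 1) $ i = u $ i"
    proof (cases "s i + p < ?n")
      case True then show ?thesis using p1 by (simp add: col K_def kry_J w_def)
    next
      case False
      then have "m < s i" using mlt p_def by linarith
      then have "u $ t (s i) = 0" using above[of "s i"] by simp
      then show ?thesis using False p1 by (simp add: col K_def kry_J)
    qed
  qed
  define T where "T = S ** K"
  have T: "invertible T" unfolding T_def using S K by (rule invertible_mult)
  define Ti where "Ti = matrix_inv T"
  have TTi: "T ** Ti = mat 1" "Ti ** T = mat 1" unfolding Ti_def using minv_r[OF T] minv_l[OF T] by auto
  have Xe: "X = S ** Jm s ** matrix_inv S" using X_eq[OF S XJ] .
  have XT: "X ** T = T ** Zm s"
  proof -
    have "X ** T = S ** Jm s ** (matrix_inv S ** S) ** K"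
      unfolding Xe T_def by (simp add: matrix_mul_assoc)
    also have "\<dots> = S ** (Jm s ** K)" by (simp add: minv_l[OF S] matrix_mul_assoc)
    also have "\<dots> = S ** (K ** Zm s)" by (simp add: K_def K1)
    finally show ?thesis by (simp add: T_def matrix_mul_assoc)
  qed
  have TiX: "Ti ** X = Zm s ** Ti"
  proof -
    have "Ti ** X = Ti ** (X ** T) ** Ti" by (simp add: matrix_mul_assoc[symmetric] TTi)
    also have "\<dots> = (Ti ** T) ** Zm s ** Ti" by (simp add: XT matrix_mul_assoc)
    finally show ?thesis by (simp add: TTi)
  qed
  have Tp: "T *v axis (t p) 1 = v0" unfolding T_def
    by (simp add: matrix_vector_mul_assoc[symmetric] Kp Su)
  define D :: "complex^'n^'n" where "D = (\<chi> i j. if i = j \<and> p \<le> s i then 1 else 0)"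
  define Y where "Y = T ** D ** Ti"
  define F where "F = Zm s ** D - D ** Zm s"
  have Fe: "F $ i $ j = (if s i = Suc (s j) \<and> s i = p then -1 else 0)" for i j
  proof -
    have Dd: "D $ k $ l = (if k = l then (if p \<le> s l then 1 else 0) else 0)" for k l by (simp add: D_def)
    have a: "(Zm s ** D) $ i $ j = (if s i = Suc (s j) \<and> p \<le> s j then 1 else 0)"
    proof -
      have "(Zm s ** D) $ i $ j = (\<Sum>k\<in>UNIV. if k = j then Zm s $ i $ j * (if p \<le> s j then 1 else 0) else 0)"
        unfolding matrix_matrix_mult_def vec_lambda_beta by (rule sum.cong) (auto simp: Dd)
      then show ?thesis by (simp add: Zm_def)
    qed
    have b: "(D ** Zm s) $ i $ j = (if s i = Suc (s j) \<and> p \<le> s i then 1 else 0)"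
    proof -
      have "(D ** Zm s) $ i $ j = (\<Sum>k\<in>UNIV. if k = i then (if p \<le> s i then 1 else 0) * Zm s $ i $ j else 0)"
        unfolding matrix_matrix_mult_def vec_lambda_beta by (rule sum.cong) (auto simp: Dd)
      then show ?thesis by (simp add: Zm_def)
    qed
    show ?thesis unfolding F_def by (simp add: a b) 
  qed
  have br: "bracket X Y = T ** F ** Ti"
  proof -
    have "bracket X Y = (X ** T) ** D ** Ti - T ** D ** (Ti ** X)"
      unfolding bracket_def Y_def by (simp add: matrix_mul_assoc)
    also have "\<dots> = T ** F ** Ti"
      unfolding XT TiX F_def by (simp add: matrix_mul_assoc mm_diff_l mm_diff_r)
    finally show ?thesis .
  qed
  have ss: "semisimple_mat Y" unfolding semisimple_mat_def Y_def Ti_def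
    by (rule exI[of _ T], rule exI[of _ D]) (simp add: T D_def)
  have Fne: "F \<noteq> 0"
  proof
    assume "F = 0"
    then have "F $ t p $ t (p - 1) = 0" by simp
    then show False using p1 by (simp add: Fe)
  qed
  have nc: "Y \<notin> gl_center"
  proof
    assume "Y \<in> gl_center"
    then have "bracket X Y = 0" unfolding gl_center_def by blast
    then have "Ti ** (T ** F ** Ti) ** T = 0" using br by simp
    moreover have "Ti ** (T ** F ** Ti) ** T = (Ti ** T) ** F ** (Ti ** T)" by (simp add: matrix_mul_assoc)
    ultimately have "F = 0" by (simp add: TTi)
    then show False using Fne by simp
  qed
  have tp: "bracket X Y \<in> trace_perp (lie_p v0)"
    unfolding trace_perp_def lie_p_def
  proof (intro CollectI ballI)
    fix A :: "complex^'n^'n" assume "A \<in> {A. A *v v0 = 0}"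
    then have Av: "A *v v0 = 0" by simp
    have ATp: "(A ** T) $ i $ t p = 0" for i
    proof -
      have "(A ** T) $ i $ t p = ((A ** T) *v axis (t p) 1) $ i" by (simp add: col)
      also have "\<dots> = 0" by (simp add: matrix_vector_mul_assoc[symmetric] Tp Av)
      finally show ?thesis .
    qed
    have z: "(A ** T) ** F = 0"
    proof -
      have "((A ** T) ** F) $ i $ j = 0" for i j
      proof -
        have "((A ** T) ** F) $ i $ j = (\<Sum>k\<in>UNIV. (A ** T) $ i $ k * (if s k = p then (if p = Suc (s j) then -1 else 0) else 0))"
          unfolding matrix_matrix_mult_def vec_lambda_beta by (rule sum.cong) (auto simp: Fe)
        also have "\<dots> = (\<Sum>k\<in>UNIV. if s k = p then (A ** T) $ i $ k * (if p = Suc (s j) then -1 else 0) else 0)"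
          by (rule sum.cong) auto
        also have "\<dots> = 0" using p1 by (simp only: sum_sig) (simp add: ATp)
        finally show ?thesis .
      qed
      then show ?thesis by (simp add: vec_eq_iff)
    qed
    have "A ** bracket X Y = ((A ** T) ** F) ** Ti" by (simp add: br matrix_mul_assoc)
    also have "\<dots> = 0" unfolding z by (simp add: vec_eq_iff matrix_matrix_mult_def)
    finally show "trace (A ** bracket X Y) = 0" by (simp add: trace_def)
  qed
  show ?thesis using ss nc tp by blast
qed

end


lemma tendsto_matmul:
  fixes f g :: "'a \<Rightarrow> complex^'n^'n"
  assumes "(f \<longlongrightarrow> A) F" "(g \<longlongrightarrow> B) F"
  shows "((\<lambda>x. f x ** g x) \<longlongrightarrow> A ** B) F"
  unfolding matrix_matrix_mult_def by (intro tendsto_intros assms)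

lemma cont_pw: "continuous_on UNIV (\<lambda>N::complex^'n^'n. pw N k w)"
proof (induction k)
  case 0 then show ?case by (simp add: continuous_on_const)
next
  case (Suc k)
  have e: "(\<lambda>N::complex^'n^'n. pw N (Suc k) w) = (\<lambda>N. \<chi> i. \<Sum>j\<in>UNIV. N $ i $ j * pw N k w $ j)"
    by (simp add: pw_Suc matrix_vector_mult_def)
  show ?case unfolding e
    by (intro continuous_intros continuous_on_component Suc continuous_on_id)
qed

lemma open_kry: "open {N::complex^'n^'n. invertible (kry s N v0)}"
proof -
  have c: "continuous_on UNIV (\<lambda>N::complex^'n^'n. det (kry s N v0))"
    unfolding det_def kry_def vec_lambda_beta
    by (intro continuous_intros continuous_on_component cont_pw)
  have "{N::complex^'n^'n. invertible (kry s N v0)} = {N. det (kry s N v0) \<noteq> 0}"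
    by (simp add: invertible_det_nz)
  then show ?thesis using open_Collect_neq[OF c continuous_on_const] by simp
qed

context ordn begin
lemma kry_col0: "kry s N w *v axis (t 0) 1 = w"
proof -
  have "0 < CARD('n)" by simp
  then show ?thesis by (simp add: vec_eq_iff col kry_def)
qed
end


lemma prod_inv:
  fixes a a' b b' :: "'a::semiring_1^'n^'n"
  assumes "a ** a' = mat 1" "a' ** a = mat 1" "b ** b' = mat 1" "b' ** b = mat 1"
  shows "(a ** b) ** (b' ** a') = mat 1" "(b' ** a') ** (a ** b) = mat 1"
proof -
  have "(a ** b) ** (b' ** a') = a ** (b ** b') ** a'" by (simp add: matrix_mul_assoc)
  then show "(a ** b) ** (b' ** a') = mat 1" using assms by simp
  have "(b' ** a') ** (a ** b) = b' ** (a' ** a) ** b" by (simp add: matrix_mul_assoc)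
  then show "(b' ** a') ** (a ** b) = mat 1" using assms by simp
qed

lemma mm_add_r: "((B::'a::semiring_1^'n^'m) + C) ** A = B ** A + C ** A"
  by (simp add: vec_eq_iff matrix_matrix_mult_def sum.distrib algebra_simps)

lemma mm_scaleR_l: "((r::real) *\<^sub>R (A::complex^'n^'m)) ** B = r *\<^sub>R (A ** B)"
  by (simp add: vec_eq_iff matrix_matrix_mult_def scaleR_sum_right)
lemma mm_scaleR_r: "(A::complex^'n^'m) ** ((r::real) *\<^sub>R B) = r *\<^sub>R (A ** B)"
  by (simp add: vec_eq_iff matrix_matrix_mult_def scaleR_sum_right)

lemma inv_pair: fixes g :: "'a::semiring_1^'n^'n" assumes "invertible g"
  shows "g ** matrix_inv g = mat 1" "matrix_inv g ** g = mat 1"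
  using minv_r[OF assms] minv_l[OF assms] by auto

context ordn begin

lemma caseA:
  fixes S X :: "complex^'n^'n" and v0 :: "complex^'n"
  assumes S: "invertible S" and XJ: "matrix_inv S ** X ** S = Jm s"
   and u1: "(matrix_inv S *v v0) $ t (CARD('n) - 1) \<noteq> 0"
  shows "openin (top_of_set (orbit GL X)) (orbit (stab v0) X) \<and> orbit GL X \<subseteq> closure (orbit (stab v0) X)"
proof -
  let ?n = "CARD('n)"
  define Si where "Si = matrix_inv S"
  have SSi: "S ** Si = mat 1" "Si ** S = mat 1" unfolding Si_def using inv_pair[OF S] by auto
  have Xe: "X = S ** Jm s ** Si" unfolding Si_def using X_eq[OF S XJ] .
  have kX: "kry s X w = S ** kry s (Jm s) (Si *v w)" for w
  proof -
    have "kry s X w = kry s (S ** Jm s ** Si) (S *v (Si *v w))"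
      by (simp add: Xe[symmetric] matrix_vector_mul_assoc SSi)
    then show ?thesis using kry_conj[OF SSi(2)] by simp
  qed
  have KX1: "X ** kry s X w = kry s X w ** Zm s" for w
  proof -
    have "X ** kry s X w = X ** (S ** kry s (Jm s) (Si *v w))" by (simp only: kX)
    also have "\<dots> = S ** Jm s ** (Si ** S) ** kry s (Jm s) (Si *v w)"
      by (simp add: Xe matrix_mul_assoc)
    also have "\<dots> = S ** (Jm s ** kry s (Jm s) (Si *v w))" by (simp add: SSi matrix_mul_assoc)
    also have "\<dots> = kry s X w ** Zm s" by (simp add: K1 kX matrix_mul_assoc)
    finally show ?thesis .
  qed
  define U where "U = {N::complex^'n^'n. invertible (kry s N v0)}"
  have K0: "invertible (kry s X v0)" unfolding kX
    using S K3[OF u1[folded Si_def]] by (rule invertible_mult)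
  have kconj: "kry s (g ** X ** matrix_inv g) v0 = g ** kry s X (matrix_inv g *v v0)" if g: "invertible g" for g
  proof -
    have "kry s (g ** X ** matrix_inv g) v0 = kry s (g ** X ** matrix_inv g) (g *v (matrix_inv g *v v0))"
      by (simp add: matrix_vector_mul_assoc inv_pair[OF g])
    then show ?thesis using kry_conj[OF inv_pair(2)[OF g]] by simp
  qed
  have char: "orbit (stab v0) X = orbit GL X \<inter> U"
  proof
    show "orbit (stab v0) X \<subseteq> orbit GL X \<inter> U"
    proof
      fix N assume "N \<in> orbit (stab v0) X"
      then obtain h where h: "invertible h" "h *v v0 = v0" "N = h ** X ** matrix_inv h"
        by (auto simp: orbit_def stab_def conj_act_def)
      have "matrix_inv h *v v0 = matrix_inv h *v (h *v v0)" using h(2) by simp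
      then have hiv: "matrix_inv h *v v0 = v0" by (simp add: matrix_vector_mul_assoc inv_pair[OF h(1)])
      have "N \<in> orbit GL X" unfolding orbit_def GL_def conj_act_def using h by blast
      moreover have "kry s N v0 = h ** kry s X v0"
        using kconj[OF h(1)] h(3) hiv by simp
      then have "N \<in> U" unfolding U_def using invertible_mult[OF h(1) K0] by simp
      ultimately show "N \<in> orbit GL X \<inter> U" by blast
    qed
  next
    show "orbit GL X \<inter> U \<subseteq> orbit (stab v0) X"
    proof
      fix N assume NU: "N \<in> orbit GL X \<inter> U"
      then obtain g where g: "invertible g" "N = g ** X ** matrix_inv g"
        by (auto simp: orbit_def GL_def conj_act_def)
      define gi where "gi = matrix_inv g"
      have ggi: "g ** gi = mat 1" "gi ** g = mat 1" unfolding gi_def using inv_pair[OF g(1)] by auto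
      define w where "w = gi *v v0"
      have gw: "g *v w = v0" unfolding w_def by (simp add: matrix_vector_mul_assoc ggi)
      have kN: "kry s N v0 = g ** kry s X w" unfolding w_def gi_def using kconj[OF g(1)] g(2) by simp
      have "kry s X w = gi ** kry s N v0" unfolding kN by (simp add: matrix_mul_assoc ggi)
      then have Kw: "invertible (kry s X w)"
        using invertible_mult[OF inv_invertible[OF g(1)]] NU U_def gi_def by auto
      define K0i where "K0i = matrix_inv (kry s X v0)"
      have KK: "kry s X v0 ** K0i = mat 1" "K0i ** kry s X v0 = mat 1" unfolding K0i_def using inv_pair[OF K0] by auto
      have K0iX: "K0i ** X = Zm s ** K0i"
      proof -
        have "K0i ** X = K0i ** (X ** kry s X v0) ** K0i" by (simp add: matrix_mul_assoc[symmetric] KK)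
        also have "\<dots> = (K0i ** kry s X v0) ** Zm s ** K0i" by (simp add: KX1 matrix_mul_assoc)
        finally show ?thesis by (simp add: KK)
      qed
      define C where "C = kry s X w ** K0i"
      have CX: "C ** X = X ** C"
      proof -
        have "C ** X = kry s X w ** (K0i ** X)" unfolding C_def by (simp add: matrix_mul_assoc)
        also have "\<dots> = (kry s X w ** Zm s) ** K0i" by (simp add: K0iX matrix_mul_assoc)
        also have "\<dots> = X ** C" unfolding C_def by (simp add: KX1[symmetric] matrix_mul_assoc)
        finally show ?thesis .
      qed
      have Cv: "C *v v0 = w"
      proof -
        have "K0i *v v0 = axis (t 0) 1"
          using kry_col0[of X v0] by (metis KK(2) matrix_vector_mul_assoc matrix_vector_mul_lid)
        then show ?thesis unfolding C_def by (simp add: matrix_vector_mul_assoc[symmetric] kry_col0)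
      qed
      have C: "invertible C" unfolding C_def K0i_def using Kw inv_invertible[OF K0] by (rule invertible_mult)
      define Ci where "Ci = matrix_inv C"
      have CCi: "C ** Ci = mat 1" "Ci ** C = mat 1" unfolding Ci_def using inv_pair[OF C] by auto
      define h where "h = g ** C"
      have hh: "h ** (Ci ** gi) = mat 1" "(Ci ** gi) ** h = mat 1" unfolding h_def using prod_inv[OF ggi CCi] by auto
      have h: "invertible h" using hh unfolding invertible_def by blast
      have hi: "matrix_inv h = Ci ** gi" using minv_unique[OF hh] .
      have hv: "h *v v0 = v0" unfolding h_def by (simp add: matrix_vector_mul_assoc[symmetric] Cv gw)
      have "conj_act h X = g ** (C ** X) ** Ci ** gi" unfolding conj_act_def hi unfolding h_def by (simp add: matrix_mul_assoc)
      also have "\<dots> = g ** X ** (C ** Ci) ** gi" by (simp add: CX matrix_mul_assoc)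
      also have "\<dots> = N" by (simp add: CCi g(2) gi_def)
      finally show "N \<in> orbit (stab v0) X" unfolding orbit_def stab_def using h hv by blast
    qed
  qed
  have op: "openin (top_of_set (orbit GL X)) (orbit (stab v0) X)"
    unfolding openin_open using char open_kry[of s v0] U_def by blast
  have dense: "orbit GL X \<subseteq> closure (orbit (stab v0) X)"
  proof
    fix N assume N: "N \<in> orbit GL X"
    then obtain g where g: "invertible g" "N = g ** X ** matrix_inv g"
      by (auto simp: orbit_def GL_def conj_act_def)
    define gi where "gi = matrix_inv g"
    have ggi: "g ** gi = mat 1" "gi ** g = mat 1" unfolding gi_def using inv_pair[OF g(1)] by auto
    define u' where "u' = Si *v (gi *v v0)"
    show "N \<in> closure (orbit (stab v0) X)"
    proof (cases "u' $ t (?n - 1) = 0")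
      case False
      have "kry s N v0 = g ** (S ** kry s (Jm s) u')"
        unfolding u'_def gi_def using kconj[OF g(1)] g(2) kX by simp
      then have "N \<in> U" unfolding U_def using invertible_mult[OF g(1) invertible_mult[OF S K3[OF False]]] by simp
      then show ?thesis using char N closure_subset by blast
    next
      case True
      have "S *v u' = gi *v v0" unfolding u'_def by (simp add: matrix_vector_mul_assoc[of S Si] SSi)
      then have "v0 = g *v (S *v u')" by (simp add: matrix_vector_mul_assoc[of g gi] ggi)
      moreover have "v0 \<noteq> 0" using u1 by auto
      ultimately have "u' \<noteq> 0" by auto
      then obtain j where j: "u' $ j \<noteq> 0" by (auto simp: vec_eq_iff)
      have jt: "j \<noteq> t (?n - 1)" using j True by auto
      define E :: "complex^'n^'n" where "E = (\<chi> a b. if a = t (?n - 1) \<and> b = j then 1 / u' $ j else 0)"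
      have EE: "E ** E = 0"
        unfolding E_def matrix_matrix_mult_def using jt by (simp add: vec_eq_iff if_distrib[of "\<lambda>x. x * _"] cong: if_cong)
      define kp where "kp r = mat 1 + r *\<^sub>R E" for r :: real
      define km where "km r = mat 1 - r *\<^sub>R E" for r :: real
      have kpm: "kp r ** km r = mat 1" "km r ** kp r = mat 1" for r
        unfolding kp_def km_def
        by (simp_all add: mm_diff_l mm_add_r matrix_add_ldistrib mm_diff_r mm_scaleR_l mm_scaleR_r EE)
      have kpu: "(kp r *v u') $ t (?n - 1) = complex_of_real r" for r
      proof -
        have "(kp r *v u') $ t (?n - 1) = (\<Sum>b\<in>UNIV. (if t (?n - 1) = b then u' $ b else 0) + (if b = j then r *\<^sub>R (1 / u' $ j) * u' $ b else 0))"
          unfolding kp_def matrix_vector_mult_def vec_lambda_beta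
          by (rule sum.cong) (auto simp: E_def mat_def algebra_simps)
        also have "\<dots> = complex_of_real r" using True j by (simp add: sum.distrib scaleR_conv_of_real)
        finally show ?thesis .
      qed
      define r where "r k = inverse (real (Suc k))" for k
      define gk where "gk k = (g ** S) ** (km (r k) ** Si)" for k
      define gik where "gik k = (S ** kp (r k)) ** (Si ** gi)" for k
      have gg: "gk k ** gik k = mat 1" "gik k ** gk k = mat 1" for k
      proof -
        have a: "km (r k) ** Si ** (S ** kp (r k)) = mat 1" "S ** kp (r k) ** (km (r k) ** Si) = mat 1"
          using prod_inv[OF kpm(2) kpm(1) SSi(2) SSi(1), of "r k"] by auto
        have b: "g ** S ** (Si ** gi) = mat 1" "Si ** gi ** (g ** S) = mat 1"
          using prod_inv[OF ggi SSi] by auto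
        show "gk k ** gik k = mat 1" "gik k ** gk k = mat 1"
          unfolding gk_def gik_def using prod_inv[OF b a] by auto
      qed
      define M where "M k = gk k ** X ** gik k" for k
      have Min: "M k \<in> orbit (stab v0) X" for k
      proof -
        have gkinv: "invertible (gk k)" using gg unfolding invertible_def by blast
        have gki: "matrix_inv (gk k) = gik k" using minv_unique[OF gg] .
        have "M k \<in> orbit GL X" unfolding orbit_def GL_def conj_act_def M_def gki[symmetric] using gkinv by blast
        moreover have "Si *v (gik k *v v0) = kp (r k) *v u'"
        proof -
          have "Si ** gik k = (Si ** S) ** kp (r k) ** (Si ** gi)" unfolding gik_def by (simp add: matrix_mul_assoc)
          then show ?thesis unfolding u'_def by (simp add: matrix_vector_mul_assoc SSi)
        qed
        then have "kry s (M k) v0 = gk k ** (S ** kry s (Jm s) (kp (r k) *v u'))"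
          unfolding M_def using kconj[OF gkinv] kX gki by simp
        moreover have "invertible (kry s (Jm s) (kp (r k) *v u'))"
          by (rule K3, unfold kpu r_def) (simp del: of_nat_Suc)
        ultimately have "M k \<in> orbit GL X \<inter> U" unfolding U_def
          using invertible_mult[OF gkinv invertible_mult[OF S]] by auto
        then show ?thesis using char by simp
      qed
      have Me: "M k = (g ** S) ** km (r k) ** Jm s ** kp (r k) ** (Si ** gi)" for k
      proof -
        have "M k = (g ** S) ** km (r k) ** (Si ** X ** S) ** kp (r k) ** (Si ** gi)"
          unfolding M_def gk_def gik_def by (simp add: matrix_mul_assoc)
        then show ?thesis using XJ Si_def by simp
      qed
      have Ne: "N = (g ** S) ** mat 1 ** Jm s ** mat 1 ** (Si ** gi)"
        using g(2) Xe gi_def by (simp add: matrix_mul_assoc)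
      have rl: "r \<longlonglongrightarrow> 0" unfolding r_def by (rule LIMSEQ_inverse_real_of_nat)
      have El: "(\<lambda>k. r k *\<^sub>R E) \<longlonglongrightarrow> 0"
        using tendsto_scaleR[OF rl tendsto_const[of E]] by simp
      have kpl: "(\<lambda>k. kp (r k)) \<longlonglongrightarrow> mat 1" unfolding kp_def using tendsto_add[OF tendsto_const El] by simp
      have kml: "(\<lambda>k. km (r k)) \<longlonglongrightarrow> mat 1" unfolding km_def using tendsto_diff[OF tendsto_const El] by simp
      have "M \<longlonglongrightarrow> N" unfolding Me Ne
        by (intro tendsto_matmul tendsto_const kpl kml)
      then show ?thesis unfolding closure_sequential using Min by blast
    qed
  qed
  show ?thesis using op dense by blast
qed

end


theorem mainTheorem11:
  fixes v0 :: "complex^'n::finite" and X :: "complex^'n^'n"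
  assumes "v0 \<noteq> 0"
    and "regular_nilpotent X"
    and "\<not> (openin (top_of_set (orbit GL X)) (orbit (stab v0) X)
             \<and> orbit GL X \<subseteq> closure (orbit (stab v0) X))"
  shows "\<exists>Y. semisimple_mat Y \<and> Y \<notin> gl_center \<and> bracket X Y \<in> trace_perp (lie_p v0)"
proof -
  obtain S and sg :: "'n \<Rightarrow> nat" where S: "invertible S" and b: "bij_betw sg UNIV {0..<CARD('n)}"
    and XJ: "matrix_inv S ** X ** S = (\<chi> i j. if sg j = Suc (sg i) then 1 else 0)"
    using assms(2) unfolding regular_nilpotent_def by blast
  interpret ordn sg using b by unfold_locales
  have XJ': "matrix_inv S ** X ** S = Jm sg" using XJ by (simp add: Jm_def)
  show ?thesis
  proof (cases "(matrix_inv S *v v0) $ t (CARD('n) - 1) = 0")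
    case True
    then show ?thesis using caseB[OF S XJ' assms(1)] by blast
  next
    case False
    then show ?thesis using caseA[OF S XJ' False] assms(3) by blast
  qed
qed


end
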